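(* Let $v$ be a weight on $\mathbb D$ and let $(X,\|\cdot\|)$ be a Banach space of analytic functions in $\mathbb D$. Let $\varphi$ be an entire function. If the superposition operator $S_\varphi$ is a bounded operator from $X$ into $DH^\infty_v$, then $S_{\varphi'}$ maps $X$ into $DH^\infty_v$.
   Context: For $\varphi$ entire, $S_\varphi(f)=\varphi\circ f$ for $f$ analytic in the unit disc $\mathbb D$. A weight on $\mathbb D$ is a positive continuous function $v$ on $\mathbb D$ which is radial ($v(z)=v(|z|)$), with $r\mapsto v(r)$ strictly decreasing on $[0,1)$ and $\lim_{r\to1}v(r)=0$. $H^\infty_v=\{f\text{ analytic in }\mathbb D:\sup_{z\in\mathbb D}v(z)|f(z)|<\infty\}$ with norm $\|f\|_v=\sup_{z}v(z)|f(z)|$, and $DH^\infty_v=\{f\text{ analytic in }\mathbb D: f'\in H^\infty_v\}$ with norm $\|f\|_{D,v}=|f(0)|+\|f'\|_v$. "Bounded" for the nonlinear operator $S_\varphi$ means it maps $X$ into $DH^\infty_v$ and maps bounded subsets of $X$ to bounded subsets of $DH^\infty_v$. *)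

theory Defs
  imports "HOL-Analysis.Analysis"
begin

abbreviation unit_disc :: "complex set" where
  "unit_disc \<equiv> ball 0 1"

definition is_weight :: "(complex \<Rightarrow> real) \<Rightarrow> bool" where
  "is_weight v \<longleftrightarrow>
     continuous_on unit_disc v \<and>
     (\<forall>z\<in>unit_disc. v z > 0) \<and>
     (\<forall>z\<in>unit_disc. v z = v (complex_of_real (cmod z))) \<and>
     (\<forall>r s. 0 \<le> r \<longrightarrow> r < s \<longrightarrow> s < 1 \<longrightarrow>
        v (complex_of_real s) < v (complex_of_real r)) \<and>
     ((\<lambda>r. v (complex_of_real r)) \<longlongrightarrow> 0) (at_left 1)"

definition in_Hv :: "(complex \<Rightarrow> real) \<Rightarrow> (complex \<Rightarrow> complex) \<Rightarrow> bool" where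
  "in_Hv v f \<longleftrightarrow> f holomorphic_on unit_disc \<and>
     (\<exists>C. \<forall>z\<in>unit_disc. v z * cmod (f z) \<le> C)"

definition in_DHv :: "(complex \<Rightarrow> real) \<Rightarrow> (complex \<Rightarrow> complex) \<Rightarrow> bool" where
  "in_DHv v f \<longleftrightarrow> f holomorphic_on unit_disc \<and> in_Hv v (deriv f)"

definition norm_Hv :: "(complex \<Rightarrow> real) \<Rightarrow> (complex \<Rightarrow> complex) \<Rightarrow> real" where
  "norm_Hv v f = (SUP z\<in>unit_disc. v z * cmod (f z))"

definition norm_DHv :: "(complex \<Rightarrow> real) \<Rightarrow> (complex \<Rightarrow> complex) \<Rightarrow> real" where
  "norm_DHv v f = cmod (f 0) + norm_Hv v (deriv f)"

definition banach_space_analytic ::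
  "(complex \<Rightarrow> complex) set \<Rightarrow> ((complex \<Rightarrow> complex) \<Rightarrow> real) \<Rightarrow> bool" where
  "banach_space_analytic X N \<longleftrightarrow>
     (\<forall>f\<in>X. f holomorphic_on unit_disc) \<and>
     (\<forall>c. (\<lambda>_. c) \<in> X) \<and>
     (\<forall>f\<in>X. \<forall>g\<in>X. (\<lambda>z. f z + g z) \<in> X) \<and>
     (\<forall>f\<in>X. \<forall>c. (\<lambda>z. c * f z) \<in> X) \<and>
     (\<forall>f\<in>X. N f \<ge> 0) \<and>
     (\<forall>f\<in>X. N f = 0 \<longleftrightarrow> (\<forall>z\<in>unit_disc. f z = 0)) \<and>
     (\<forall>f\<in>X. \<forall>g\<in>X. N (\<lambda>z. f z + g z) \<le> N f + N g) \<and>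
     (\<forall>f\<in>X. \<forall>c. N (\<lambda>z. c * f z) = cmod c * N f) \<and>
     (\<forall>f\<in>X. \<forall>g\<in>X. (\<forall>z\<in>unit_disc. f z = g z) \<longrightarrow> N f = N g) \<and>
     (\<forall>z\<in>unit_disc. \<exists>C. \<forall>f\<in>X. cmod (f z) \<le> C * N f) \<and>
     (\<forall>F. (\<forall>n. F n \<in> X) \<longrightarrow>
        (\<forall>e>0. \<exists>K. \<forall>m\<ge>K. \<forall>n\<ge>K. N (\<lambda>z. F m z - F n z) < e) \<longrightarrow>
        (\<exists>f\<in>X. ((\<lambda>n. N (\<lambda>z. F n z - f z)) \<longlongrightarrow> 0) sequentially))"

definition superposition_bounded ::
  "(complex \<Rightarrow> complex) \<Rightarrow> (complex \<Rightarrow> complex) set \<Rightarrow> ((complex \<Rightarrow> complex) \<Rightarrow> real)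
     \<Rightarrow> (complex \<Rightarrow> real) \<Rightarrow> bool" where
  "superposition_bounded \<phi> X N v \<longleftrightarrow>
     (\<forall>f\<in>X. in_DHv v (\<phi> \<circ> f)) \<and>
     (\<forall>B\<subseteq>X. (\<exists>R. \<forall>f\<in>B. N f \<le> R) \<longrightarrow> (\<exists>M. \<forall>f\<in>B. norm_DHv v (\<phi> \<circ> f) \<le> M))"

end

theory Submission
  imports Defs "HOL-Complex_Analysis.Complex_Analysis"
begin

lemma BA1: assumes "banach_space_analytic X N" shows "\<forall>f\<in>X. f holomorphic_on unit_disc"
  using assms unfolding banach_space_analytic_def by (elim conjE) assumption

lemma BA2: assumes "banach_space_analytic X N" shows "\<forall>c. (\<lambda>_. c) \<in> X"
  using assms unfolding banach_space_analytic_def by (elim conjE) assumption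

lemma BA3: assumes "banach_space_analytic X N" shows "\<forall>f\<in>X. \<forall>g\<in>X. (\<lambda>z. f z + g z) \<in> X"
  using assms unfolding banach_space_analytic_def by (elim conjE) assumption

lemma BA4: assumes "banach_space_analytic X N" shows "\<forall>f\<in>X. \<forall>g\<in>X. N (\<lambda>z. f z + g z) \<le> N f + N g"
  using assms unfolding banach_space_analytic_def by (elim conjE) assumption

lemma BA5: assumes "banach_space_analytic X N" shows "\<forall>f\<in>X. \<forall>c. N (\<lambda>z. c * f z) = cmod c * N f"
  using assms unfolding banach_space_analytic_def by (elim conjE) assumption

lemma SB1: assumes "superposition_bounded \<phi> X N v" shows "\<forall>f\<in>X. in_DHv v (\<phi> \<circ> f)"
  using assms unfolding superposition_bounded_def by (elim conjE) assumption

lemma SB2: assumes "superposition_bounded \<phi> X N v" shows "\<forall>B\<subseteq>X. (\<exists>R. \<forall>f\<in>B. N f \<le> R) \<longrightarrow> (\<exists>M. \<forall>f\<in>B. norm_DHv v (\<phi> \<circ> f) \<le> M)"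
  using assms unfolding superposition_bounded_def by (elim conjE) assumption

theorem theorem5:
  fixes v :: "complex \<Rightarrow> real"
    and X :: "(complex \<Rightarrow> complex) set"
    and N :: "(complex \<Rightarrow> complex) \<Rightarrow> real"
    and \<phi> :: "complex \<Rightarrow> complex"
  assumes "is_weight v"
    and "banach_space_analytic X N"
    and "\<phi> holomorphic_on UNIV"
    and "superposition_bounded \<phi> X N v"
  shows "\<forall>f\<in>X. in_DHv v (deriv \<phi> \<circ> f)"
proof
  fix f assume fX: "f \<in> X"
  have vpos0: "\<forall>z\<in>unit_disc. v z > 0" using assms(1) unfolding is_weight_def by (elim conjE) assumption
  have vpos: "\<And>z. z \<in> unit_disc \<Longrightarrow> v z > 0" using vpos0 by blast
  note BA = BA1[OF assms(2)] BA2[OF assms(2)] BA3[OF assms(2)] BA4[OF assms(2)] BA5[OF assms(2)]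
  note SB = SB1[OF assms(4)] SB2[OF assms(4)]
  have fh: "f holomorphic_on unit_disc" using fX BA(1) by blast
  have d1: "deriv \<phi> holomorphic_on UNIV" using assms(3) by (simp add: holomorphic_deriv)
  have d2: "deriv (deriv \<phi>) holomorphic_on UNIV" using d1 by (simp add: holomorphic_deriv)
  have fd: "\<And>z. z \<in> unit_disc \<Longrightarrow> f field_differentiable at z"
    using fh holomorphic_on_imp_differentiable_at[OF fh open_ball] by blast
  have pd: "\<And>w. \<phi> field_differentiable at w"
    using holomorphic_on_imp_differentiable_at[OF assms(3) open_UNIV] by blast
  have p1d: "\<And>w. deriv \<phi> field_differentiable at w"
    using holomorphic_on_imp_differentiable_at[OF d1 open_UNIV] by blast
  have p2d: "\<And>w. deriv (deriv \<phi>) field_differentiable at w"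
    using holomorphic_on_imp_differentiable_at[OF d2 open_UNIV] by blast
  define fc where "fc = (\<lambda>c::complex. \<lambda>z. f z + c)"
  define B where "B = fc ` {c. cmod c = 1}"
  have cX: "\<And>c. (\<lambda>_. c) \<in> X" using BA(2) by blast
  have fcX: "fc c \<in> X" for c
  proof -
    have h: "\<forall>g\<in>X. (\<lambda>z. f z + g z) \<in> X" using BA(3) fX by blast
    show ?thesis unfolding fc_def using bspec[OF h cX[of c]] by simp
  qed
  have BX: "B \<subseteq> X" unfolding B_def using fcX by auto
  have Nc: "N (\<lambda>_. c) = cmod c * N (\<lambda>_. 1)" for c
  proof -
    note h = spec[OF bspec[OF BA(5) cX[of 1]], of c]
    show ?thesis using h by simp
  qed
  have "\<exists>R. \<forall>g\<in>B. N g \<le> R"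
  proof (intro exI ballI)
    fix g assume "g \<in> B"
    then obtain c where c: "cmod c = 1" "g = fc c" unfolding B_def by auto
    have h: "\<forall>g\<in>X. N (\<lambda>z. f z + g z) \<le> N f + N g" using BA(4) fX by blast
    note bspec[OF h cX[of c]]
    then show "N g \<le> N f + N (\<lambda>_. 1)" using c Nc[of c] unfolding fc_def by simp
  qed
  from SB(2)[rule_format, OF BX this] obtain M where M0: "\<forall>g\<in>B. norm_DHv v (\<phi> \<circ> g) \<le> M"
    by (elim exE)
  have M: "\<And>g. g \<in> B \<Longrightarrow> norm_DHv v (\<phi> \<circ> g) \<le> M" using M0 by blast
  have bound: "v z * cmod (deriv \<phi> (f z + c) * deriv f z) \<le> M"
    if z: "z \<in> unit_disc" and c: "cmod c = 1" for z c
  proof -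
    have gB: "fc c \<in> B" using c unfolding B_def by auto
    have DH: "in_DHv v (\<phi> \<circ> fc c)" using SB(1) fcX by blast
    then obtain C where C: "\<forall>z\<in>unit_disc. v z * cmod (deriv (\<phi> \<circ> fc c) z) \<le> C"
      unfolding in_DHv_def in_Hv_def by blast
    have bdd: "bdd_above ((\<lambda>z. v z * cmod (deriv (\<phi> \<circ> fc c) z)) ` unit_disc)"
      using C by (auto intro: bdd_aboveI2)
    have "v z * cmod (deriv (\<phi> \<circ> fc c) z) \<le> norm_Hv v (deriv (\<phi> \<circ> fc c))"
      unfolding norm_Hv_def using bdd z by (rule cSUP_upper2) simp
    also have "\<dots> \<le> norm_DHv v (\<phi> \<circ> fc c)" unfolding norm_DHv_def by simp
    also have "\<dots> \<le> M" using M gB .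
    finally have *: "v z * cmod (deriv (\<phi> \<circ> fc c) z) \<le> M" .
    have fcd: "fc c field_differentiable at z" unfolding fc_def
      using fd[OF z] by (intro field_differentiable_add) (auto intro: field_differentiable_const)
    have "deriv (fc c) z = deriv f z" unfolding fc_def
      using fd[OF z] by (subst deriv_add) (auto simp: field_differentiable_const)
    moreover have "deriv (\<phi> \<circ> fc c) z = deriv \<phi> (fc c z) * deriv (fc c) z"
      by (rule deriv_chain[OF fcd pd])
    ultimately show ?thesis using * unfolding fc_def by simp
  qed
  show "in_DHv v (deriv \<phi> \<circ> f)"
    unfolding in_DHv_def in_Hv_def
  proof (intro conjI exI ballI)
    show "deriv \<phi> \<circ> f holomorphic_on unit_disc"
      using holomorphic_on_compose[OF fh holomorphic_on_subset[OF d1]] by blast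
    show "deriv (deriv \<phi> \<circ> f) holomorphic_on unit_disc"
      using holomorphic_deriv[OF holomorphic_on_compose[OF fh holomorphic_on_subset[OF d1]] open_ball] by blast
  next
    fix z :: complex assume z: "z \<in> unit_disc"
    define w where "w = f z"
    define a where "a = deriv f z"
    define g where "g = (\<lambda>c. deriv \<phi> (w + c) * a)"
    have "(deriv \<phi> \<circ> (\<lambda>c. w + c)) holomorphic_on UNIV"
      by (rule holomorphic_on_compose) (auto intro: holomorphic_intros holomorphic_on_subset[OF d1])
    then have gh: "g holomorphic_on UNIV" unfolding g_def by (intro holomorphic_intros) (simp add: o_def)
    have gB: "norm (g c) \<le> M / v z" if "norm (0 - c) = 1" for c
      using bound[OF z, of c] that vpos[OF z] unfolding g_def w_def a_def
      by (simp add: field_simps)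
    have "norm ((deriv ^^ 1) g 0) \<le> fact 1 * (M / v z) / 1 ^ 1"
      using gh gB apply -
      apply (rule Cauchy_inequality[of g 0 1])
      apply (auto intro: holomorphic_on_subset holomorphic_on_imp_continuous_on)
      done
    moreover have "deriv g 0 = deriv (deriv \<phi>) w * a"
    proof -
      have "((\<lambda>c. deriv \<phi> (w + c)) has_field_derivative deriv (deriv \<phi>) (w + 0) * 1) (at 0)"
        apply (rule DERIV_chain2[of "deriv \<phi>"])
         apply (simp add: DERIV_deriv_iff_field_differentiable p1d)
        apply (auto intro!: derivative_eq_intros)
        done
      then have "(g has_field_derivative deriv (deriv \<phi>) w * a) (at 0)"
        unfolding g_def by (auto intro!: derivative_eq_intros)
      then show ?thesis by (rule DERIV_imp_deriv)
    qed
    moreover have "deriv (deriv \<phi> \<circ> f) z = deriv (deriv \<phi>) w * a"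
      unfolding w_def a_def by (rule deriv_chain[OF fd[OF z] p1d])
    ultimately have "cmod (deriv (deriv \<phi> \<circ> f) z) \<le> M / v z" by simp
    then show "v z * cmod (deriv (deriv \<phi> \<circ> f) z) \<le> M"
      using vpos[OF z] by (simp add: field_simps)
  qed
qed

end
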